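(* Let $p_X=\sum_{j=1}^{N_r}m_j\delta_{x_j}$ with $m_j\ge 0$, $\sum_j m_j=1$, and $x_j$ the standard points. (a) If $r\notin\mathbb{N}$ (so $N_r=2n+2$), set $m_0:=0$ and $m_{2n+3}:=0$, and assume $m_{j-1}+m_j>0$ for all $j=1,\dots,2n+3$. Then for each $j=1,\dots,2n+1$, the map $x\mapsto i(x;p_X)$ is affine on $[x_j,x_{j+1}]$ with slope $$r\log\frac{m_{j-1}+m_j}{m_{j+1}+m_{j+2}}.$$ (b) If $r\in\mathbb{N}$ (so $N_r=n+1$) and all $m_j>0$, then for each $j=1,\dots,n$ the map $x\mapsto i(x;p_X)$ is affine on $[x_j,x_{j+1}]$ with slope $r\log(m_j/m_{j+1})$.
   Context: Fix $b>0$ and set $r:=1/(2b)$, $n:=\lfloor r\rfloor$. Consider the additive uniform noise channel $Y=X+N$ with $N\sim\mathrm{Uniform}(-b,b)$ independent of $X$, so the transition density is $p_N(y\mid x)=r\,\mathbf{1}_{x-b<y<x+b}$. For a probability distribution $p_X$ on $[0,1]$ the output density is $p_Y(y;p_X)=\int p_N(y\mid x)\,dp_X(x)$ and the marginal information density is $i(x;p_X)=\int p_N(y\mid x)\log\frac{p_N(y\mid x)}{p_Y(y;p_X)}\,dy$. Standard points: let $N_r=n+1$ if $r\in\mathbb{N}$ and $N_r=2n+2$ if $r\notin\mathbb{N}$. For $j=1,\dots,N_r$ set $x_j=(j-1)/n$ if $r\in\mathbb{N}$; if $r\notin\mathbb{N}$, set $x_j=(j-1)/(2r)$ for odd $j$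 and $x_j=1-(2n+2-j)/(2r)$ for even $j$ (these satisfy $0=x_1<x_2<\dots<x_{N_r}=1$). *)

theory Defs
  imports "HOL-Probability.Probability"
begin

text \<open>Additive uniform noise channel Y = X + N, N ~ Uniform(-b,b).\<close>

definition rr :: "real \<Rightarrow> real" where
  "rr b = 1 / (2 * b)"

definition nn :: "real \<Rightarrow> nat" where
  "nn b = nat \<lfloor>rr b\<rfloor>"

definition Nr :: "real \<Rightarrow> nat" where
  "Nr b = (if rr b \<in> \<nat> then nn b + 1 else 2 * nn b + 2)"

definition std_pt :: "real \<Rightarrow> nat \<Rightarrow> real" where
  "std_pt b j =
     (if rr b \<in> \<nat> then (real j - 1) / real (nn b)
      else if odd j then (real j - 1) / (2 * rr b)
      else 1 - (2 * real (nn b) + 2 - real j) / (2 * rr b))"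

definition pN :: "real \<Rightarrow> real \<Rightarrow> real \<Rightarrow> real" where
  "pN b y x = rr b * indicator {x - b <..< x + b} y"

definition pY :: "real \<Rightarrow> real pmf \<Rightarrow> real \<Rightarrow> real" where
  "pY b P y = integral\<^sup>L (measure_pmf P) (\<lambda>x. pN b y x)"

definition info_dens :: "real \<Rightarrow> real pmf \<Rightarrow> real \<Rightarrow> real" where
  "info_dens b P x = integral\<^sup>L lborel (\<lambda>y. pN b y x * ln (pN b y x / pY b P y))"

end

theory Submission
  imports Defs
begin



lemma set_int_const_ival:
  fixes F :: "real \<Rightarrow> real"
  assumes Fm: "F \<in> borel_measurable lborel" and A: "A \<in> sets lborel" "emeasure lborel A \<noteq> \<infinity>"
   and ae: "AE y in lborel. y \<in> A \<longrightarrow> F y = c"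
  shows "set_lebesgue_integral lborel A F = measure lborel A * c"
proof -
  have "set_lebesgue_integral lborel A F = set_lebesgue_integral lborel A (\<lambda>_. c)"
    by (rule set_lebesgue_integral_cong_AE) (use Fm A ae in auto)
  also have "\<dots> = measure lborel A * c" by (metis set_integral_const[OF A] real_scaleR_def)
  finally show ?thesis .
qed

lemma core:
  fixes F :: "real \<Rightarrow> real"
  assumes Fm: "F \<in> borel_measurable lborel" and Fb: "\<And>y. \<bar>F y\<bar> \<le> B"
  and bpos: "b > 0" and x01: "x0 \<le> x1" "x1 - x0 \<le> 2*b"
  and Fp: "\<And>y. x0 + b < y \<Longrightarrow> y < x1 + b \<Longrightarrow> F y = cp"
  and Fn: "\<And>y. x0 - b < y \<Longrightarrow> y < x1 - b \<Longrightarrow> F y = cm"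
  shows "\<exists>c. \<forall>x\<in>{x0..x1}. set_lebesgue_integral lborel {x-b<..<x+b} F = (cp - cm) * x + c"
proof -
  have si: "set_integrable lborel A F" if "A \<in> sets lborel" "emeasure lborel A < \<infinity>" for A
    unfolding set_integrable_def
    by (rule integrableI_bounded_set_indicator[where B=B]) (use that Fm Fb in auto)
  have oc: "set_lebesgue_integral lborel {u<..<v} F = set_lebesgue_integral lborel {u<..v} F" for u v
    by (rule set_integral_cong_set)
      (use Fm in \<open>auto simp: set_borel_measurable_def intro!: eventually_mono[OF AE_lborel_singleton[of v]]\<close>)
  have I: "set_lebesgue_integral lborel {x-b<..<x+b} F =
      set_lebesgue_integral lborel {x0-b<..<x0+b} F + (x - x0) * (cp - cm)"
    if x: "x0 \<le> x" "x \<le> x1" for x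
  proof -
    have e1: "{x-b<..x+b} = {x-b<..x0+b} \<union> {x0+b<..x+b}" using x x01 bpos by auto
    have e2: "{x0-b<..x0+b} = {x0-b<..x-b} \<union> {x-b<..x0+b}" using x x01 bpos by auto
    have a: "set_lebesgue_integral lborel {x-b<..<x+b} F =
       set_lebesgue_integral lborel {x-b<..x0+b} F + set_lebesgue_integral lborel {x0+b<..x+b} F"
      unfolding oc e1 by (rule set_integral_Un) (use x x01 in \<open>auto intro!: si\<close>)
    have b: "set_lebesgue_integral lborel {x0-b<..<x0+b} F =
       set_lebesgue_integral lborel {x0-b<..x-b} F + set_lebesgue_integral lborel {x-b<..x0+b} F"
      unfolding oc e2 by (rule set_integral_Un) (use x x01 in \<open>auto intro!: si\<close>)
    have c: "set_lebesgue_integral lborel {x0+b<..x+b} F = (x - x0) * cp"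
    proof -
      have "set_lebesgue_integral lborel {x0+b<..x+b} F = measure lborel {x0+b<..x+b} * cp"
        by (rule set_int_const_ival[OF Fm])
          (use x in \<open>auto intro!: eventually_mono[OF AE_lborel_singleton[of "x+b"]] Fp\<close>)
      then show ?thesis using x by (simp add: measure_def)
    qed
    have d: "set_lebesgue_integral lborel {x0-b<..x-b} F = (x - x0) * cm"
    proof -
      have "set_lebesgue_integral lborel {x0-b<..x-b} F = measure lborel {x0-b<..x-b} * cm"
        by (rule set_int_const_ival[OF Fm])
          (use x in \<open>auto intro!: eventually_mono[OF AE_lborel_singleton[of "x-b"]] Fn\<close>)
      then show ?thesis using x by (simp add: measure_def)
    qed
    show ?thesis using a b c d by (simp add: algebra_simps)
  qed
  show ?thesis
    by (rule exI[of _ "set_lebesgue_integral lborel {x0-b<..<x0+b} F - (cp - cm) * x0"])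
       (auto simp: I algebra_simps)
qed



lemma rr_pos: "b > 0 \<Longrightarrow> rr b > 0" by (simp add: rr_def)
lemma two_b: "b > 0 \<Longrightarrow> 2 * b = 1 / rr b" by (simp add: rr_def)

lemma info_dens_set:
  "info_dens b P x = set_lebesgue_integral lborel {x-b<..<x+b} (\<lambda>y. rr b * ln (rr b / pY b P y))"
  unfolding info_dens_def set_lebesgue_integral_def pN_def
  by (rule Bochner_Integration.integral_cong) (auto split: split_indicator)

lemma pY_formula:
  assumes inj: "inj_on (std_pt b) {1..N}" and pm: "\<forall>j\<in>{1..N}. pmf P (std_pt b j) = m j"
    and sm: "(\<Sum>j=1..N. m j) = 1"
  shows "pY b P y = (\<Sum>k=1..N. rr b * indicator {std_pt b k - b<..<std_pt b k + b} y * m k)"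
proof -
  define S where "S = std_pt b ` {1..N}"
  have fS: "finite S" by (simp add: S_def)
  have sumS: "sum (pmf P) S = 1"
    unfolding S_def using sm pm by (subst sum.reindex[OF inj]) auto
  have zero: "pmf P x = 0" if "x \<notin> S" for x
  proof (rule ccontr)
    assume "pmf P x \<noteq> 0"
    then have "pmf P x > 0" using pmf_nonneg[of P x] by linarith
    moreover have "measure (measure_pmf P) (insert x S) = pmf P x + 1"
      using fS that sumS by (simp add: measure_measure_pmf_finite)
    moreover have "measure (measure_pmf P) (insert x S) \<le> 1" by (rule measure_pmf.prob_le_1)
    ultimately show False by linarith
  qed
  have "pY b P y = (\<Sum>a\<in>S. pN b y a * pmf P a)"
    unfolding pY_def
    by (rule integral_measure_pmf_real[OF fS]) (use zero in \<open>auto simp: set_pmf_iff\<close>)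
  also have "\<dots> = (\<Sum>k=1..N. pN b y (std_pt b k) * m k)"
    unfolding S_def by (subst sum.reindex[OF inj]) (use pm in auto)
  finally show ?thesis by (simp add: pN_def)
qed

lemma sum_ind_restrict:
  fixes r b y :: real and s m :: "nat \<Rightarrow> real"
  shows
  "(\<Sum>k=1..N. r * indicator {s k - b<..<s k + b} y * m k) =
    r * sum m ({1..N} \<inter> {k. y - b < s k \<and> s k < y + b})"
proof -
  have "(\<Sum>k=1..N. r * indicator {s k - b<..<s k + b} y * m k) =
      r * (\<Sum>k=1..N. if k \<in> {k. y - b < s k \<and> s k < y + b} then m k else 0)"
  proof -
    have e: "\<And>k. r * indicator {s k - b<..<s k + b} y * m k =
       r * (if k \<in> {k. y - b < s k \<and> s k < y + b} then m k else 0)"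
      by (auto simp: indicator_def)
    show ?thesis by (simp only: e sum_distrib_left)
  qed
  also have "\<dots> = r * sum m ({1..N} \<inter> {k. y - b < s k \<and> s k < y + b})"
    by (simp add: sum.inter_restrict)
  finally show ?thesis .
qed

lemma assemble:
  assumes bpos: "b > 0" and inj: "inj_on (std_pt b) {1..N}"
    and pm: "\<forall>j\<in>{1..N}. pmf P (std_pt b j) = m j" and sm: "(\<Sum>j=1..N. m j) = 1"
    and x01: "x0 \<le> x1" "x1 - x0 \<le> 2*b" and Mp: "Mp > 0" and Mm: "Mm > 0"
    and Rp: "\<And>y. x0+b<y \<Longrightarrow> y<x1+b \<Longrightarrow> pY b P y = rr b * Mp"
    and Rm: "\<And>y. x0-b<y \<Longrightarrow> y<x1-b \<Longrightarrow> pY b P y = rr b * Mm"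
  shows "\<exists>c. \<forall>x\<in>{x0..x1}. info_dens b P x = rr b * ln (Mm/Mp) * x + c"
proof -
  let ?r = "rr b"
  have r: "?r > 0" using bpos by (rule rr_pos)
  define F where "F = (\<lambda>y. ?r * ln (?r / pY b P y))"
  have pYf: "pY b P = (\<lambda>y. \<Sum>k=1..N. ?r * indicator {std_pt b k - b<..<std_pt b k + b} y * m k)"
    using pY_formula[OF inj pm sm] by auto
  have Fm: "F \<in> borel_measurable lborel" unfolding F_def pYf by measurable
  define V where "V = (\<lambda>K. ?r * sum m K) ` Pow {1..N}"
  have fV: "finite V" by (simp add: V_def)
  have inV: "pY b P y \<in> V" for y
    unfolding pYf sum_ind_restrict V_def by auto
  define B where "B = Max ((\<lambda>v. \<bar>?r * ln (?r / v)\<bar>) ` V)"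
  have Fb: "\<bar>F y\<bar> \<le> B" for y
    unfolding F_def B_def using inV[of y] fV by (intro Max_ge) auto
  have cp: "F y = - ?r * ln Mp" if "x0+b<y" "y<x1+b" for y
    using Rp[OF that] r Mp by (simp add: F_def ln_div ln_mult)
  have cm: "F y = - ?r * ln Mm" if "x0-b<y" "y<x1-b" for y
    using Rm[OF that] r Mm by (simp add: F_def ln_div ln_mult)
  obtain c where c: "\<forall>x\<in>{x0..x1}. set_lebesgue_integral lborel {x-b<..<x+b} F
        = (- ?r * ln Mp - - ?r * ln Mm) * x + c"
    using core[OF Fm Fb bpos x01 cp cm] by blast
  show ?thesis
  proof (intro exI ballI)
    fix x assume xin: "x \<in> {x0..x1}"
    have cx: "set_lebesgue_integral lborel {x-b<..<x+b} F = (- ?r * ln Mp - - ?r * ln Mm) * x + c"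
      using c xin by blast have "info_dens b P x = set_lebesgue_integral lborel {x-b<..<x+b} F"
      by (simp only: info_dens_set F_def)
    then show "info_dens b P x = ?r * ln (Mm/Mp) * x + c"
      using cx Mp Mm by (simp add: ln_div algebra_simps)
  qed
qed



lemma char2:
  fixes s :: "nat \<Rightarrow> real"
  assumes sm: "strict_mono s" and st: "\<And>k. s (k+2) = s k + d" and j: "1 \<le> j"
    and t: "s j < t" "t < s (j+1)"
  shows "(t < s k \<and> s k < t + d) \<longleftrightarrow> k \<in> {j+1, j+2}"
    and "(t - d < s k \<and> s k < t) \<longleftrightarrow> k \<in> {j-1, j}"
proof -
  have le: "s a \<le> s c \<longleftrightarrow> a \<le> c" for a c using sm by (simp add: strict_mono_less_eq)
  have lt: "s a < s c \<longleftrightarrow> a < c" for a c using sm by (simp add: strict_mono_less)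
  have jj: "s (j+1) = s (j-1) + d" using st[of "j-1"] j by simp
  have j3: "s (j+3) = s (j+1) + d" using st[of "j+1"] by (simp add: eval_nat_numeral)
  show "(t < s k \<and> s k < t + d) \<longleftrightarrow> k \<in> {j+1, j+2}"
  proof
    assume a: "t < s k \<and> s k < t + d"
    then have "s j < s k" "s k < s (j+3)" using t j3 by auto
    then have "j < k" "k < j + 3" using lt by blast+
    then show "k \<in> {j+1, j+2}" by auto
  next
    assume "k \<in> {j+1, j+2}"
    moreover have "s (j-1) \<le> s j" using le by simp
    moreover have "s (j+1) < s (j+2)" using lt by simp
    ultimately show "t < s k \<and> s k < t + d" using t jj st[of j] by auto
  qed
  show "(t - d < s k \<and> s k < t) \<longleftrightarrow> k \<in> {j-1, j}"
  proof
    assume a: "t - d < s k \<and> s k < t"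
    then have "s k < s (j+1)" "s j < s (k+2)" using t st[of k] by auto
    then have "k < j+1" "j < k + 2" using lt by blast+
    then show "k \<in> {j-1, j}" by auto
  next
    assume "k \<in> {j-1, j}"
    moreover have "s (j-1) \<le> s j" using le by simp
    ultimately show "t - d < s k \<and> s k < t" using t jj by auto
  qed
qed

lemma stdA:
  assumes b: "b > 0" and rN: "rr b \<notin> \<nat>"
  shows "\<And>k. std_pt b (k+2) = std_pt b k + 1 / rr b" and "strict_mono (std_pt b)"
    and "real (nn b) < rr b" "rr b < real (nn b) + 1"
proof -
  let ?r = "rr b" and ?n = "nn b"
  have r: "?r > 0" using b by (rule rr_pos)
  have n1: "real ?n \<le> ?r" "?r < real ?n + 1" unfolding nn_def using r
    by (simp_all add: of_nat_nat)
  have "real ?n \<noteq> ?r" using rN by (metis of_nat_in_Nats)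
  then show n2: "real ?n < ?r" using n1 by simp
  show "?r < real ?n + 1" by (fact n1(2))
  show st: "std_pt b (k+2) = std_pt b k + 1 / ?r" for k
    using r rN by (auto simp: std_pt_def field_simps)
  have rr2: "?r * ?r < ?r * (real ?n + 1)" using mult_strict_left_mono[OF n1(2) r] .
  have "std_pt b k < std_pt b (Suc k)" for k
    using r rN n1(2) n2 rr2 by (auto simp: std_pt_def field_simps)
  then show "strict_mono (std_pt b)" by (simp add: strict_mono_Suc_iff)
qed

lemma pY_set:
  assumes inj: "inj_on (std_pt b) {1..N}" and pm: "\<forall>j\<in>{1..N}. pmf P (std_pt b j) = m j"
    and sm: "(\<Sum>j=1..N. m j) = 1"
  shows "pY b P y = rr b * sum m ({1..N} \<inter> {k. y - b < std_pt b k \<and> std_pt b k < y + b})"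
  using pY_formula[OF inj pm sm, of y] sum_ind_restrict by simp

lemma caseA:
  fixes m m' :: "nat \<Rightarrow> real"
  assumes b: "b>0" and rN: "rr b \<notin> \<nat>" and sm: "(\<Sum>j=1..Nr b. m j) = 1"
    and pm: "\<forall>j\<in>{1..Nr b}. pmf P (std_pt b j) = m j"
    and m'def: "m' = (\<lambda>k. if k \<in> {1..Nr b} then m k else 0)"
    and pos: "\<forall>j\<in>{1..2*nn b+3}. m'(j-1) + m' j > 0" and j: "j \<in> {1..2*nn b+1}"
  shows "\<exists>c. \<forall>x\<in>{std_pt b j..std_pt b (j+1)}.
     info_dens b P x = rr b * ln ((m'(j-1)+m' j)/(m'(j+1)+m'(j+2))) * x + c"
proof -
  let ?s = "std_pt b" and ?r = "rr b" and ?N = "Nr b"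
  note A = stdA[OF b rN]
  have r: "?r>0" using b by (rule rr_pos)
  have inj: "inj_on ?s {1..?N}" by (metis A(2) inj_onI strict_mono_eq)
  have j1: "1 \<le> j" using j by simp
  have d2b: "2*b = 1/?r" using b by (rule two_b)
  have Mp: "m'(j+1)+m'(j+2) > 0" using pos j by (force simp: Ball_def)
  have Mm: "m'(j-1)+m' j > 0" using pos j by (force simp: Ball_def)
  have sumK: "sum m ({1..?N} \<inter> K) = sum m' K" if "finite K" for K
    using that by (simp add: m'def sum.inter_restrict Int_commute)
  have Rp: "pY b P y = ?r * (m'(j+1)+m'(j+2))" if y: "?s j + b < y" "y < ?s (j+1) + b" for y
  proof -
    have t: "?s j < y - b" "y - b < ?s (j+1)" using y by auto
    have "{k. y - b < ?s k \<and> ?s k < y + b} = {k. y - b < ?s k \<and> ?s k < (y - b) + 1/?r}"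
      using d2b by (auto simp: algebra_simps)
    also have "\<dots> = {j+1, j+2}" using char2(1)[OF A(2) A(1) j1 t] by blast
    finally show ?thesis using pY_set[OF inj pm sm, of y] sumK[of "{j+1,j+2}"] by simp
  qed
  have Rm: "pY b P y = ?r * (m'(j-1)+m' j)" if y: "?s j - b < y" "y < ?s (j+1) - b" for y
  proof -
    have t: "?s j < y + b" "y + b < ?s (j+1)" using y by auto
    have "{k. y - b < ?s k \<and> ?s k < y + b} = {k. (y + b) - 1/?r < ?s k \<and> ?s k < y + b}"
      using d2b by (auto simp: algebra_simps)
    also have "\<dots> = {j-1, j}" using char2(2)[OF A(2) A(1) j1 t] by blast
    finally show ?thesis using pY_set[OF inj pm sm, of y] sumK[of "{j-1,j}"] j1 by simp
  qed
  have x0: "?s j \<le> ?s (j+1)" using A(2) by (simp add: strict_mono_less_eq)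
  have "?s (j+1) = ?s (j-1) + 1/?r" using A(1)[of "j-1"] j1 by simp
  moreover have "?s (j-1) \<le> ?s j" using A(2) by (simp add: strict_mono_less_eq)
  ultimately have x1: "?s (j+1) - ?s j \<le> 2*b" using d2b by simp
  show ?thesis by (rule assemble[OF b inj pm sm x0 x1 Mp Mm Rp Rm])
qed




lemma char1:
  fixes s :: "nat \<Rightarrow> real"
  assumes sm: "strict_mono s" and st: "\<And>k. s (k+1) = s k + d"
    and t: "s j < t" "t < s (j+1)"
  shows "(t < s k \<and> s k < t + d) \<longleftrightarrow> k = j+1"
    and "(t - d < s k \<and> s k < t) \<longleftrightarrow> k = j"
proof -
  have lt: "s a < s c \<longleftrightarrow> a < c" for a c using sm by (simp add: strict_mono_less)
  have j2: "s (j+2) = s (j+1) + d" using st[of "j+1"] by (simp add: eval_nat_numeral)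
  show "(t < s k \<and> s k < t + d) \<longleftrightarrow> k = j+1"
  proof
    assume a: "t < s k \<and> s k < t + d"
    then have "s j < s k" "s k < s (j+2)" using t j2 by auto
    then have "j < k" "k < j + 2" using lt by blast+
    then show "k = j+1" by auto
  next
    assume "k = j+1"
    then show "t < s k \<and> s k < t + d" using t st[of j] by auto
  qed
  show "(t - d < s k \<and> s k < t) \<longleftrightarrow> k = j"
  proof
    assume a: "t - d < s k \<and> s k < t"
    then have "s k < s (j+1)" "s j < s (k+1)" using t st[of k] by auto
    then have "k < j+1" "j < k + 1" using lt by blast+
    then show "k = j" by auto
  next
    assume "k = j"
    then show "t - d < s k \<and> s k < t" using t st[of j] by auto
  qed
qed

lemma caseB:
  fixes m :: "nat \<Rightarrow> real"
  assumes b: "b>0" and rN: "rr b \<in> \<nat>" and sm: "(\<Sum>j=1..Nr b. m j) = 1"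
    and pm: "\<forall>j\<in>{1..Nr b}. pmf P (std_pt b j) = m j"
    and pos: "\<forall>j\<in>{1..Nr b}. m j > 0" and j: "j \<in> {1..nn b}"
  shows "\<exists>c. \<forall>x\<in>{std_pt b j..std_pt b (j+1)}.
     info_dens b P x = rr b * ln (m j / m (j + 1)) * x + c"
proof -
  let ?s = "std_pt b" and ?r = "rr b" and ?N = "Nr b" and ?n = "nn b"
  have r: "?r>0" using b by (rule rr_pos)
  obtain q where q: "?r = real q" using rN by (auto elim: Nats_cases)
  have nq: "?n = q" unfolding nn_def q by simp
  have N: "?N = ?n + 1" using rN by (simp add: Nr_def)
  have qpos: "real q > 0" using r q by simp
  have st: "?s (k+1) = ?s k + 1/?r" for k
    using rN qpos by (simp add: std_pt_def nq q field_simps)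
  have smono: "strict_mono ?s"
    using st r by (simp add: strict_mono_Suc_iff)
  have inj: "inj_on ?s {1..?N}" by (metis smono inj_onI strict_mono_eq)
  have d2b: "2*b = 1/?r" using b by (rule two_b)
  have Mp: "m (j+1) > 0" using pos j N by auto
  have Mm: "m j > 0" using pos j N by auto
  have Rp: "pY b P y = ?r * m (j+1)" if y: "?s j + b < y" "y < ?s (j+1) + b" for y
  proof -
    have t: "?s j < y - b" "y - b < ?s (j+1)" using y by auto
    have "{k. y - b < ?s k \<and> ?s k < y + b} = {k. y - b < ?s k \<and> ?s k < (y - b) + 1/?r}"
      using d2b by (auto simp: algebra_simps)
    also have "\<dots> = {j+1}" using char1(1)[OF smono st t] by blast
    finally show ?thesis using pY_set[OF inj pm sm, of y] j N by simp
  qed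
  have Rm: "pY b P y = ?r * m j" if y: "?s j - b < y" "y < ?s (j+1) - b" for y
  proof -
    have t: "?s j < y + b" "y + b < ?s (j+1)" using y by auto
    have "{k. y - b < ?s k \<and> ?s k < y + b} = {k. (y + b) - 1/?r < ?s k \<and> ?s k < y + b}"
      using d2b by (auto simp: algebra_simps)
    also have "\<dots> = {j}" using char1(2)[OF smono st t] by blast
    finally show ?thesis using pY_set[OF inj pm sm, of y] j N by simp
  qed
  have x0: "?s j \<le> ?s (j+1)" using smono by (simp add: strict_mono_less_eq)
  have x1: "?s (j+1) - ?s j \<le> 2*b" using st[of j] d2b by simp
  show ?thesis by (rule assemble[OF b inj pm sm x0 x1 Mp Mm Rp Rm])
qed


theorem mainTheorem5:
  fixes b :: real and P :: "real pmf" and m :: "nat \<Rightarrow> real"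
  assumes b_pos: "b > 0"
    and m_nonneg: "\<forall>j\<in>{1..Nr b}. m j \<ge> 0"
    and m_sum: "(\<Sum>j=1..Nr b. m j) = 1"
    and P_def: "\<forall>j\<in>{1..Nr b}. pmf P (std_pt b j) = m j"
  shows
    "(rr b \<notin> \<nat> \<and>
       (\<forall>j\<in>{1..2 * nn b + 3}.
          (\<lambda>k. if k \<in> {1..Nr b} then m k else 0) (j - 1)
        + (\<lambda>k. if k \<in> {1..Nr b} then m k else 0) j > 0)
     \<longrightarrow> (\<forall>j\<in>{1..2 * nn b + 1}. \<exists>c. \<forall>x\<in>{std_pt b j..std_pt b (j + 1)}.
            info_dens b P x =
              rr b * ln (((\<lambda>k. if k \<in> {1..Nr b} then m k else 0) (j - 1)
                          + (\<lambda>k. if k \<in> {1..Nr b} then m k else 0) j)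
                       / ((\<lambda>k. if k \<in> {1..Nr b} then m k else 0) (j + 1)
                          + (\<lambda>k. if k \<in> {1..Nr b} then m k else 0) (j + 2))) * x + c))
   \<and>
    (rr b \<in> \<nat> \<and> (\<forall>j\<in>{1..Nr b}. m j > 0)
     \<longrightarrow> (\<forall>j\<in>{1..nn b}. \<exists>c. \<forall>x\<in>{std_pt b j..std_pt b (j + 1)}.
            info_dens b P x = rr b * ln (m j / m (j + 1)) * x + c))"
proof (intro conjI impI)
  assume H: "rr b \<notin> \<nat> \<and>
       (\<forall>j\<in>{1..2 * nn b + 3}.
          (\<lambda>k. if k \<in> {1..Nr b} then m k else 0) (j - 1)
        + (\<lambda>k. if k \<in> {1..Nr b} then m k else 0) j > 0)"
  show "\<forall>j\<in>{1..2 * nn b + 1}. \<exists>c. \<forall>x\<in>{std_pt b j..std_pt b (j + 1)}.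
            info_dens b P x =
              rr b * ln (((\<lambda>k. if k \<in> {1..Nr b} then m k else 0) (j - 1)
                          + (\<lambda>k. if k \<in> {1..Nr b} then m k else 0) j)
                       / ((\<lambda>k. if k \<in> {1..Nr b} then m k else 0) (j + 1)
                          + (\<lambda>k. if k \<in> {1..Nr b} then m k else 0) (j + 2))) * x + c"
  proof
    fix j assume j: "j \<in> {1..2 * nn b + 1}"
    show "\<exists>c. \<forall>x\<in>{std_pt b j..std_pt b (j + 1)}.
            info_dens b P x =
              rr b * ln (((\<lambda>k. if k \<in> {1..Nr b} then m k else 0) (j - 1)
                          + (\<lambda>k. if k \<in> {1..Nr b} then m k else 0) j)
                       / ((\<lambda>k. if k \<in> {1..Nr b} then m k else 0) (j + 1)
                          + (\<lambda>k. if k \<in> {1..Nr b} then m k else 0) (j + 2))) * x + c"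
      by (rule caseA[OF b_pos conjunct1[OF H] m_sum P_def refl conjunct2[OF H] j])
  qed
next
  assume H: "rr b \<in> \<nat> \<and> (\<forall>j\<in>{1..Nr b}. m j > 0)"
  show "\<forall>j\<in>{1..nn b}. \<exists>c. \<forall>x\<in>{std_pt b j..std_pt b (j + 1)}.
            info_dens b P x = rr b * ln (m j / m (j + 1)) * x + c"
  proof
    fix j assume j: "j \<in> {1..nn b}"
    show "\<exists>c. \<forall>x\<in>{std_pt b j..std_pt b (j + 1)}.
            info_dens b P x = rr b * ln (m j / m (j + 1)) * x + c"
      by (rule caseB[OF b_pos conjunct1[OF H] m_sum P_def conjunct2[OF H] j])
  qed
qed

end
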